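(* Let $\Omega$ be a connected slice Cauchy domain of $\mathbb H$. Then $$\{f\in SH_L(\Omega):\mathcal Df=0\}=\{f\in SH_L(\Omega): f\equiv\alpha\ \text{for some }\alpha\in\mathbb H\}=\{f\in SH_R(\Omega): f\equiv\alpha\ \text{for some }\alpha\in\mathbb H\}=\{f\in SH_R(\Omega): f\mathcal D=0\}.$$
   Context: $\mathbb H$ denotes the quaternions, $\mathbb S$ the sphere of unit purely imaginary quaternions and $\mathbb C_J=\{u+Jv\}$. A set is axially symmetric if with $u+Iv$ it contains all $u+Jv$, $J\in\mathbb S$. A slice Cauchy domain is an axially symmetric open set $U$ such that for each $J\in\mathbb S$ the boundary of $U\cap\mathbb C_J$ is a finite union of nonintersecting piecewise $C^1$ Jordan curves. $SH_L(\Omega)$ (resp. $SH_R(\Omega)$) denotes the left (resp. right) slice hyperholomorphic functions on $\Omega$: $f(u+Jv)=\alpha(u,v)+J\beta(u,v)$ (resp. $\alpha+\beta J$) for all $J\in\mathbb S$, with $\alpha,\beta$ $\mathbb H$-valued differentiable, $\alpha(u,-v)=\alpha(u,v)$, $\beta(u,-v)=-\beta(u,v)$, $\partial_u\alpha-\partial_v\beta=0$, $\partial_v\alpha+\partial_u\beta=0$. $\mathcal Df=\partial_{q_0}f+\sum_{i=1}^3e_i\partial_{q_i}f$ and $f\mathcal D=\partial_{q_0}f+\sum_{i=1}^3\partial_{q_i}f\,e_i$. *)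

theory Defs
  imports "HOL-Analysis.Analysis"
begin

text \<open>Quaternions are modelled as real^4; component 1 is the real part,
 components 2,3,4 are the coefficients of e1,e2,e3.\<close>

type_synonym quat = "real^4"

definition qmult :: "quat \<Rightarrow> quat \<Rightarrow> quat" (infixl "\<odot>" 70) where
  "p \<odot> q = vector [
     p$1*q$1 - p$2*q$2 - p$3*q$3 - p$4*q$4,
     p$1*q$2 + p$2*q$1 + p$3*q$4 - p$4*q$3,
     p$1*q$3 - p$2*q$4 + p$3*q$1 + p$4*q$2,
     p$1*q$4 + p$2*q$3 - p$3*q$2 + p$4*q$1]"

definition qreal :: "real \<Rightarrow> quat" where
  "qreal u = vector [u, 0, 0, 0]"

definition qe1 :: quat where "qe1 = vector [0, 1, 0, 0]"
definition qe2 :: quat where "qe2 = vector [0, 0, 1, 0]"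
definition qe3 :: quat where "qe3 = vector [0, 0, 0, 1]"

definition qsphere :: "quat set" where
  "qsphere = {J. J$1 = 0 \<and> norm J = 1}"

definition slice_pt :: "real \<Rightarrow> real \<Rightarrow> quat \<Rightarrow> quat" where
  "slice_pt u v J = qreal u + v *\<^sub>R J"

definition axially_symmetric :: "quat set \<Rightarrow> bool" where
  "axially_symmetric U \<longleftrightarrow>
     (\<forall>u v I J. I \<in> qsphere \<longrightarrow> J \<in> qsphere \<longrightarrow> slice_pt u v I \<in> U \<longrightarrow> slice_pt u v J \<in> U)"

text \<open>The slice C_J is identified with the complex plane via
 z \<mapsto> Re z + J Im z; the boundary of U \<inter> C_J (relative to the plane C_J) is then the
 frontier of the corresponding planar set.  Jordan curves are closed simple paths, piecewise
 C^1 means valid_path.\<close>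
definition slice_cauchy_domain :: "quat set \<Rightarrow> bool" where
  "slice_cauchy_domain U \<longleftrightarrow> open U \<and> axially_symmetric U \<and>
     (\<forall>J\<in>qsphere. \<exists>\<Gamma> :: (real \<Rightarrow> complex) set.
        finite \<Gamma> \<and>
        (\<forall>\<gamma>\<in>\<Gamma>. simple_path \<gamma> \<and> pathfinish \<gamma> = pathstart \<gamma> \<and> valid_path \<gamma>) \<and>
        pairwise (\<lambda>\<gamma> \<delta>. path_image \<gamma> \<inter> path_image \<delta> = {}) \<Gamma> \<and>
        frontier {z. slice_pt (Re z) (Im z) J \<in> U} = (\<Union>\<gamma>\<in>\<Gamma>. path_image \<gamma>))"

definition slice_dom :: "quat set \<Rightarrow> (real \<times> real) set" where
  "slice_dom U = {(u, v). \<exists>J\<in>qsphere. slice_pt u v J \<in> U}"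

text \<open>Common conditions on the pair (alpha, beta): differentiability, even/odd symmetry,
 and the Cauchy-Riemann system (partials read off the derivative).\<close>
definition stem_pair :: "quat set \<Rightarrow> (real \<times> real \<Rightarrow> quat) \<Rightarrow> (real \<times> real \<Rightarrow> quat) \<Rightarrow> bool" where
  "stem_pair U \<alpha> \<beta> \<longleftrightarrow>
     (\<exists>A B. \<forall>p\<in>slice_dom U.
        (\<alpha> has_derivative A p) (at p) \<and> (\<beta> has_derivative B p) (at p) \<and>
        \<alpha> (fst p, - snd p) = \<alpha> p \<and> \<beta> (fst p, - snd p) = - \<beta> p \<and>
        A p (1, 0) - B p (0, 1) = 0 \<and> A p (0, 1) + B p (1, 0) = 0)"

definition SH_L :: "quat set \<Rightarrow> (quat \<Rightarrow> quat) set" where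
  "SH_L U = {f. \<exists>\<alpha> \<beta>. stem_pair U \<alpha> \<beta> \<and>
     (\<forall>J\<in>qsphere. \<forall>u v. slice_pt u v J \<in> U \<longrightarrow> f (slice_pt u v J) = \<alpha> (u, v) + J \<odot> \<beta> (u, v))}"

definition SH_R :: "quat set \<Rightarrow> (quat \<Rightarrow> quat) set" where
  "SH_R U = {f. \<exists>\<alpha> \<beta>. stem_pair U \<alpha> \<beta> \<and>
     (\<forall>J\<in>qsphere. \<forall>u v. slice_pt u v J \<in> U \<longrightarrow> f (slice_pt u v J) = \<alpha> (u, v) + \<beta> (u, v) \<odot> J)}"

definition has_partial :: "(quat \<Rightarrow> quat) \<Rightarrow> quat \<Rightarrow> quat \<Rightarrow> quat \<Rightarrow> bool" where
  "has_partial f e q d \<longleftrightarrow> ((\<lambda>t. f (q + t *\<^sub>R e)) has_vector_derivative d) (at 0)"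

definition left_Dirac_zero :: "(quat \<Rightarrow> quat) \<Rightarrow> quat \<Rightarrow> bool" where
  "left_Dirac_zero f q \<longleftrightarrow> (\<exists>d0 d1 d2 d3.
     has_partial f (qreal 1) q d0 \<and> has_partial f qe1 q d1 \<and>
     has_partial f qe2 q d2 \<and> has_partial f qe3 q d3 \<and>
     d0 + qe1 \<odot> d1 + qe2 \<odot> d2 + qe3 \<odot> d3 = 0)"

definition right_Dirac_zero :: "(quat \<Rightarrow> quat) \<Rightarrow> quat \<Rightarrow> bool" where
  "right_Dirac_zero f q \<longleftrightarrow> (\<exists>d0 d1 d2 d3.
     has_partial f (qreal 1) q d0 \<and> has_partial f qe1 q d1 \<and>
     has_partial f qe2 q d2 \<and> has_partial f qe3 q d3 \<and>
     d0 + d1 \<odot> qe1 + d2 \<odot> qe2 + d3 \<odot> qe3 = 0)"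

end

theory Submission imports Defs begin

lemma vector_4 [simp]:
  "(vector [a,b,c,d] :: real^4)$1 = a" "(vector [a,b,c,d] :: real^4)$2 = b"
  "(vector [a,b,c,d] :: real^4)$3 = c" "(vector [a,b,c,d] :: real^4)$4 = d"
  unfolding vector_def by simp_all

lemma qmult_nth [simp]:
  "(p \<odot> q)$1 = p$1*q$1 - p$2*q$2 - p$3*q$3 - p$4*q$4"
  "(p \<odot> q)$2 = p$1*q$2 + p$2*q$1 + p$3*q$4 - p$4*q$3"
  "(p \<odot> q)$3 = p$1*q$3 - p$2*q$4 + p$3*q$1 + p$4*q$2"
  "(p \<odot> q)$4 = p$1*q$4 + p$2*q$3 - p$3*q$2 + p$4*q$1"
  by (simp_all add: qmult_def)

lemma qbasis_nth [simp]:
  "qreal u $1 = u" "qreal u $2 = 0" "qreal u $3 = 0" "qreal u $4 = 0"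
  "qe1 $1 = 0" "qe1 $2 = 1" "qe1 $3 = 0" "qe1 $4 = 0"
  "qe2 $1 = 0" "qe2 $2 = 0" "qe2 $3 = 1" "qe2 $4 = 0"
  "qe3 $1 = 0" "qe3 $2 = 0" "qe3 $3 = 0" "qe3 $4 = 1"
  by (simp_all add: qreal_def qe1_def qe2_def qe3_def)

lemma quat_eq_iff: "(p::quat) = q \<longleftrightarrow> p$1 = q$1 \<and> p$2 = q$2 \<and> p$3 = q$3 \<and> p$4 = q$4"
  by (simp add: vec_eq_iff forall_4)

lemma norm_quat: "norm (p::quat) = sqrt ((p$1)^2 + (p$2)^2 + (p$3)^2 + (p$4)^2)"
  by (simp add: norm_vec_def L2_set_def sum_4 add.assoc)

lemma inner_quat: "(p::quat) \<bullet> q = p$1*q$1 + p$2*q$2 + p$3*q$3 + p$4*q$4"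
  by (simp add: inner_vec_def sum_4 add.assoc)

lemma bilinear_qmult: "bounded_bilinear (\<odot>)"
proof -
  have "bilinear (\<odot>)"
    unfolding bilinear_def
    by (auto intro!: linearI simp: quat_eq_iff algebra_simps)
  then show ?thesis by (simp add: bilinear_conv_bounded_bilinear)
qed

lemma dirac_alg:
  fixes J b A10 A01 B10 B01 :: quat and w :: real
  assumes J: "J$1 = 0" "(J$2)^2 + (J$3)^2 + (J$4)^2 = 1"
    and cr: "A10 - B01 = 0" "A01 + B10 = 0"
  shows "(A10 + J \<odot> B10)
     + qe1 \<odot> ((J$2) *\<^sub>R A01 + J \<odot> ((J$2) *\<^sub>R B01) + (w *\<^sub>R (qe1 - (J$2) *\<^sub>R J)) \<odot> b)
     + qe2 \<odot> ((J$3) *\<^sub>R A01 + J \<odot> ((J$3) *\<^sub>R B01) + (w *\<^sub>R (qe2 - (J$3) *\<^sub>R J)) \<odot> b)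
     + qe3 \<odot> ((J$4) *\<^sub>R A01 + J \<odot> ((J$4) *\<^sub>R B01) + (w *\<^sub>R (qe3 - (J$4) *\<^sub>R J)) \<odot> b)
     = (-2*w) *\<^sub>R b"
proof -
  have cr': "A10 = B01" "A01 = - B10" using cr by (simp_all add: eq_neg_iff_add_eq_0)
  show ?thesis
  unfolding quat_eq_iff using J(1)
  apply (simp add: cr')
  apply (intro conjI)
  using J(2) by algebra+
qed

lemma dirac_alg_R:
  fixes J b A10 A01 B10 B01 :: quat and w :: real
  assumes J: "J$1 = 0" "(J$2)^2 + (J$3)^2 + (J$4)^2 = 1"
    and cr: "A10 - B01 = 0" "A01 + B10 = 0"
  shows "(A10 + B10 \<odot> J)
     + ((J$2) *\<^sub>R A01 + ((J$2) *\<^sub>R B01) \<odot> J + b \<odot> (w *\<^sub>R (qe1 - (J$2) *\<^sub>R J))) \<odot> qe1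
     + ((J$3) *\<^sub>R A01 + ((J$3) *\<^sub>R B01) \<odot> J + b \<odot> (w *\<^sub>R (qe2 - (J$3) *\<^sub>R J))) \<odot> qe2
     + ((J$4) *\<^sub>R A01 + ((J$4) *\<^sub>R B01) \<odot> J + b \<odot> (w *\<^sub>R (qe3 - (J$4) *\<^sub>R J))) \<odot> qe3
     = (-2*w) *\<^sub>R b"
proof -
  have cr': "A10 = B01" "A01 = - B10" using cr by (simp_all add: eq_neg_iff_add_eq_0)
  show ?thesis
  unfolding quat_eq_iff using J(1)
  apply (simp add: cr')
  apply (intro conjI)
  using J(2) by algebra+
qed

definition qim :: "quat \<Rightarrow> quat" where "qim p = p - qreal (p$1)"

lemma qim_nth [simp]: "qim p $1 = 0" "qim p $2 = p$2" "qim p $3 = p$3" "qim p $4 = p$4"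
  by (simp_all add: qim_def)

lemma qim_line: "qim (q + t *\<^sub>R e) = qim q + t *\<^sub>R qim e"
  by (simp add: quat_eq_iff)

lemma norm_line_deriv:
  fixes x y :: quat
  assumes "x \<noteq> 0"
  shows "((\<lambda>t. norm (x + t *\<^sub>R y)) has_real_derivative ((x \<bullet> y) / norm x)) (at 0)"
proof -
  have n: "(norm has_derivative (\<lambda>h. h \<bullet> sgn x)) (at (x + 0 *\<^sub>R y))"
    using has_derivative_norm[OF assms] by simp
  have l: "((\<lambda>t. x + t *\<^sub>R y) has_derivative (\<lambda>h. h *\<^sub>R y)) (at 0)"
    by (auto intro!: derivative_eq_intros)
  have "((\<lambda>t. norm (x + t *\<^sub>R y)) has_derivative (\<lambda>h. (h *\<^sub>R y) \<bullet> sgn x)) (at 0)"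
    using has_derivative_compose[OF l n] by simp
  moreover have "(\<lambda>h. (h *\<^sub>R y) \<bullet> sgn x) = (\<lambda>h. ((x \<bullet> y) / norm x) * h)"
    by (rule ext) (simp add: sgn_div_norm inner_commute divide_inverse mult_ac)
  ultimately show ?thesis
    by (simp only: has_field_derivative_def)
qed

lemma path_deriv:
  fixes m :: "quat \<Rightarrow> quat \<Rightarrow> quat"
  assumes bm: "bounded_bilinear m"
  fixes \<alpha> \<beta> :: "real \<times> real \<Rightarrow> quat" and q e :: quat
  defines "x \<equiv> qim q"
  defines "s \<equiv> (x \<bullet> qim e) / norm x"
  assumes x0: "x \<noteq> 0"
    and hA: "(\<alpha> has_derivative A) (at (q$1, norm x))"
    and hB: "(\<beta> has_derivative B) (at (q$1, norm x))"
  shows "((\<lambda>t. \<alpha> ((q + t *\<^sub>R e)$1, norm (qim (q + t *\<^sub>R e)))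
            + m ((1 / norm (qim (q + t *\<^sub>R e))) *\<^sub>R qim (q + t *\<^sub>R e)) (\<beta> ((q + t *\<^sub>R e)$1, norm (qim (q + t *\<^sub>R e)))))
         has_vector_derivative
           (A (e$1, s) + m ((1 / norm x) *\<^sub>R x) (B (e$1, s))
            + m ((1 / norm x) *\<^sub>R qim e - (s / (norm x)^2) *\<^sub>R x) (\<beta> (q$1, norm x)))) (at 0)"
proof -
  define n where "n t = norm (x + t *\<^sub>R qim e)" for t
  define c where "c t = (q$1 + t * e$1, n t)" for t
  define K where "K t = (1 / n t) *\<^sub>R (x + t *\<^sub>R qim e)" for t
  have fun_eq: "(\<lambda>t. \<alpha> ((q + t *\<^sub>R e)$1, norm (qim (q + t *\<^sub>R e)))
            + m ((1 / norm (qim (q + t *\<^sub>R e))) *\<^sub>R qim (q + t *\<^sub>R e)) (\<beta> ((q + t *\<^sub>R e)$1, norm (qim (q + t *\<^sub>R e)))))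
     = (\<lambda>t. \<alpha> (c t) + m (K t) (\<beta> (c t)))"
    by (rule ext) (simp add: c_def K_def n_def qim_line x_def)
  have n0: "n 0 = norm x" by (simp add: n_def)
  have c0: "c 0 = (q$1, norm x)" by (simp add: c_def n0)
  have K0: "K 0 = (1 / norm x) *\<^sub>R x" by (simp add: K_def n0)
  have dn: "(n has_real_derivative s) (at 0)"
    unfolding n_def s_def by (rule norm_line_deriv[OF x0])
  have dc: "(c has_vector_derivative (e$1, s)) (at 0)"
    unfolding c_def
    by (rule has_vector_derivative_Pair)
       (auto intro!: derivative_eq_intros dn[unfolded has_real_derivative_iff_has_vector_derivative])
  have dK: "(K has_vector_derivative ((1 / norm x) *\<^sub>R qim e - (s / (norm x)^2) *\<^sub>R x)) (at 0)"
  proof -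
    have "((\<lambda>t. (1 / n t) *\<^sub>R (x + t *\<^sub>R qim e)) has_vector_derivative
        ((1 / n 0) *\<^sub>R qim e + (- s / (n 0)^2) *\<^sub>R (x + 0 *\<^sub>R qim e))) (at 0)"
      using n0 x0
      by (auto intro!: derivative_eq_intros dn simp: power2_eq_square divide_inverse)
    then show ?thesis unfolding K_def using n0 by (simp add: algebra_simps)
  qed
  have dAc: "((\<lambda>t. \<alpha> (c t)) has_vector_derivative A (e$1, s)) (at 0)"
  proof -
    have "((\<alpha> \<circ> c) has_derivative (A \<circ> (\<lambda>h. h *\<^sub>R (e$1, s)))) (at 0)"
      by (rule diff_chain_at[OF dc[unfolded has_vector_derivative_def]]) (use hA c0 in simp)
    moreover have "A \<circ> (\<lambda>h. h *\<^sub>R (e$1, s)) = (\<lambda>h. h *\<^sub>R A (e$1, s))"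
      using linear_cmul[OF has_derivative_linear[OF hA]] by (auto simp: o_def)
    ultimately show ?thesis by (simp add: has_vector_derivative_def o_def)
  qed
  have dBc: "((\<lambda>t. \<beta> (c t)) has_vector_derivative B (e$1, s)) (at 0)"
  proof -
    have "((\<beta> \<circ> c) has_derivative (B \<circ> (\<lambda>h. h *\<^sub>R (e$1, s)))) (at 0)"
      by (rule diff_chain_at[OF dc[unfolded has_vector_derivative_def]]) (use hB c0 in simp)
    moreover have "B \<circ> (\<lambda>h. h *\<^sub>R (e$1, s)) = (\<lambda>h. h *\<^sub>R B (e$1, s))"
      using linear_cmul[OF has_derivative_linear[OF hB]] by (auto simp: o_def)
    ultimately show ?thesis by (simp add: has_vector_derivative_def o_def)
  qed
  have dKB: "((\<lambda>t. m (K t) (\<beta> (c t))) has_vector_derivative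
      (m (K 0) (B (e$1, s)) + m ((1 / norm x) *\<^sub>R qim e - (s / (norm x)^2) *\<^sub>R x) (\<beta> (c 0)))) (at 0)"
    by (rule bounded_bilinear.has_vector_derivative[OF bm dK dBc])
  show ?thesis
    unfolding fun_eq using has_vector_derivative_add[OF dAc dKB] K0 c0 by (simp add: add.assoc)
qed

lemma linear_qim: "linear qim"
  by (auto intro!: linearI simp: quat_eq_iff)

lemma cont_qim: "continuous_on S qim"
  by (rule linear_continuous_on) (simp add: linear_qim linear_conv_bounded_linear[symmetric])

lemma open_Omega': "open \<Omega> \<Longrightarrow> open (\<Omega> \<inter> {p. qim p \<noteq> 0})"
  by (intro open_Int) (auto intro!: open_Collect_neq continuous_intros cont_qim)

lemma slice_decomp:
  assumes "qim p \<noteq> 0"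
  shows "(1 / norm (qim p)) *\<^sub>R qim p \<in> qsphere"
    and "slice_pt (p$1) (norm (qim p)) ((1 / norm (qim p)) *\<^sub>R qim p) = p"
  using assms by (auto simp: qsphere_def slice_pt_def quat_eq_iff)

lemma rep_im:
  fixes m :: "quat \<Rightarrow> quat \<Rightarrow> quat"
  assumes rep: "\<forall>J\<in>qsphere. \<forall>u v. slice_pt u v J \<in> \<Omega> \<longrightarrow> f (slice_pt u v J) = \<alpha> (u,v) + m J (\<beta> (u,v))"
    and "p \<in> \<Omega>" "qim p \<noteq> 0"
  shows "f p = \<alpha> (p$1, norm (qim p)) + m ((1 / norm (qim p)) *\<^sub>R qim p) (\<beta> (p$1, norm (qim p)))"
  using rep slice_decomp[OF assms(3)] assms(2) by metis

lemma partial_gen: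
  fixes m :: "quat \<Rightarrow> quat \<Rightarrow> quat" and \<alpha> \<beta> :: "real \<times> real \<Rightarrow> quat"
  assumes bm: "bounded_bilinear m" and \<Omega>o: "open \<Omega>"
    and rep: "\<forall>J\<in>qsphere. \<forall>u v. slice_pt u v J \<in> \<Omega> \<longrightarrow> f (slice_pt u v J) = \<alpha> (u,v) + m J (\<beta> (u,v))"
    and q: "q \<in> \<Omega>" "qim q \<noteq> 0"
    and hA: "(\<alpha> has_derivative A) (at (q$1, norm (qim q)))"
    and hB: "(\<beta> has_derivative B) (at (q$1, norm (qim q)))"
    and hp: "has_partial f e q d"
  shows "d = A (e$1, (qim q \<bullet> qim e) / norm (qim q)) + m ((1 / norm (qim q)) *\<^sub>R qim q) (B (e$1, (qim q \<bullet> qim e) / norm (qim q)))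
            + m ((1 / norm (qim q)) *\<^sub>R qim e - (((qim q \<bullet> qim e) / norm (qim q)) / (norm (qim q))^2) *\<^sub>R qim q) (\<beta> (q$1, norm (qim q)))"
proof -
  let ?S = "(\<lambda>t. q + t *\<^sub>R e) -` (\<Omega> \<inter> {p. qim p \<noteq> 0})"
  have oS: "open ?S"
    by (rule open_vimage[OF open_Omega'[OF \<Omega>o]]) (auto intro!: continuous_intros)
  have S0: "0 \<in> ?S" using q by simp
  note pd = path_deriv[OF bm q(2) hA hB, of e]
  have "((\<lambda>t. f (q + t *\<^sub>R e)) has_vector_derivative
           (A (e$1, (qim q \<bullet> qim e) / norm (qim q)) + m ((1 / norm (qim q)) *\<^sub>R qim q) (B (e$1, (qim q \<bullet> qim e) / norm (qim q)))
            + m ((1 / norm (qim q)) *\<^sub>R qim e - (((qim q \<bullet> qim e) / norm (qim q)) / (norm (qim q))^2) *\<^sub>R qim q) (\<beta> (q$1, norm (qim q))))) (at 0)"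
    by (rule has_vector_derivative_transform_within_open[OF pd oS S0])
       (use rep_im[of \<Omega> f \<alpha> m \<beta>, OF rep] in auto)
  with hp show ?thesis unfolding has_partial_def
    using vector_derivative_unique_at by blast
qed

lemma partial_formulas:
  fixes m :: "quat \<Rightarrow> quat \<Rightarrow> quat" and \<alpha> \<beta> :: "real \<times> real \<Rightarrow> quat"
  assumes bm: "bounded_bilinear m" and \<Omega>o: "open \<Omega>"
    and rep: "\<forall>J\<in>qsphere. \<forall>u v. slice_pt u v J \<in> \<Omega> \<longrightarrow> f (slice_pt u v J) = \<alpha> (u,v) + m J (\<beta> (u,v))"
    and q: "q \<in> \<Omega>" "qim q \<noteq> 0"
    and hA: "(\<alpha> has_derivative A) (at (q$1, norm (qim q)))"
    and hB: "(\<beta> has_derivative B) (at (q$1, norm (qim q)))"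
  defines "J \<equiv> (1 / norm (qim q)) *\<^sub>R qim q"
  shows "has_partial f (qreal 1) q d \<Longrightarrow> d = A (1,0) + m J (B (1,0))"
    and "e$1 = 0 \<Longrightarrow> has_partial f e q d \<Longrightarrow>
           d = (J \<bullet> e) *\<^sub>R A (0,1) + m J ((J \<bullet> e) *\<^sub>R B (0,1))
               + m ((1 / norm (qim q)) *\<^sub>R (e - (J \<bullet> e) *\<^sub>R J)) (\<beta> (q$1, norm (qim q)))"
proof -
  assume hp: "has_partial f (qreal 1) q d"
  have qi: "qim (qreal 1) = 0" by (simp add: quat_eq_iff)
  show "d = A (1,0) + m J (B (1,0))"
    using partial_gen[OF bm \<Omega>o rep q hA hB hp] by (simp add: qi J_def bounded_bilinear.zero_left[OF bm])
next
  assume e1: "e$1 = 0" and hp: "has_partial f e q d"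
  have qi: "qim e = e" using e1 by (simp add: quat_eq_iff)
  let ?n = "norm (qim q)"
  have n0: "?n > 0" using q(2) by simp
  have s: "(qim q \<bullet> e) / ?n = J \<bullet> e" by (simp add: J_def)
  have lA: "A (0, J \<bullet> e) = (J \<bullet> e) *\<^sub>R A (0,1)"
    using linear_cmul[OF has_derivative_linear[OF hA], of "J \<bullet> e" "(0,1)"] by simp
  have lB: "B (0, J \<bullet> e) = (J \<bullet> e) *\<^sub>R B (0,1)"
    using linear_cmul[OF has_derivative_linear[OF hB], of "J \<bullet> e" "(0,1)"] by simp
  have K: "(1 / ?n) *\<^sub>R e - ((J \<bullet> e) / ?n^2) *\<^sub>R qim q = (1 / ?n) *\<^sub>R (e - (J \<bullet> e) *\<^sub>R J)"
    using n0 by (simp add: J_def algebra_simps power2_eq_square)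
  show "d = (J \<bullet> e) *\<^sub>R A (0,1) + m J ((J \<bullet> e) *\<^sub>R B (0,1))
               + m ((1 / norm (qim q)) *\<^sub>R (e - (J \<bullet> e) *\<^sub>R J)) (\<beta> (q$1, norm (qim q)))"
    using partial_gen[OF bm \<Omega>o rep q hA hB hp] unfolding qi s e1 lA lB K
    by (simp add: J_def)
qed

lemma J_facts:
  assumes "qim q \<noteq> 0"
  defines "J \<equiv> (1 / norm (qim q)) *\<^sub>R qim q"
  shows "J$1 = 0" "(J$2)^2 + (J$3)^2 + (J$4)^2 = 1"
    "J \<bullet> qe1 = J$2" "J \<bullet> qe2 = J$3" "J \<bullet> qe3 = J$4"
proof -
  show j1: "J$1 = 0" by (simp add: J_def)
  have "norm J = 1" using assms(1) by (simp add: J_def)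
  then have "sqrt ((J$1)^2 + (J$2)^2 + (J$3)^2 + (J$4)^2) = 1" by (simp add: norm_quat)
  then show "(J$2)^2 + (J$3)^2 + (J$4)^2 = 1" using j1 by (simp add: add.assoc)
qed (simp_all add: inner_quat)

lemma beta_zero_L:
  fixes \<alpha> \<beta> :: "real \<times> real \<Rightarrow> quat"
  assumes \<Omega>o: "open \<Omega>"
    and rep: "\<forall>J\<in>qsphere. \<forall>u v. slice_pt u v J \<in> \<Omega> \<longrightarrow> f (slice_pt u v J) = \<alpha> (u,v) + J \<odot> \<beta> (u,v)"
    and q: "q \<in> \<Omega>" "qim q \<noteq> 0"
    and hA: "(\<alpha> has_derivative A) (at (q$1, norm (qim q)))"
    and hB: "(\<beta> has_derivative B) (at (q$1, norm (qim q)))"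
    and cr: "A (1,0) - B (0,1) = 0" "A (0,1) + B (1,0) = 0"
    and D: "left_Dirac_zero f q"
  shows "\<beta> (q$1, norm (qim q)) = 0"
proof -
  note PF = partial_formulas[OF bilinear_qmult \<Omega>o rep q hA hB]
  note JF = J_facts[OF q(2)]
  obtain d0 d1 d2 d3 where h: "has_partial f (qreal 1) q d0" "has_partial f qe1 q d1"
     "has_partial f qe2 q d2" "has_partial f qe3 q d3" and s: "d0 + qe1 \<odot> d1 + qe2 \<odot> d2 + qe3 \<odot> d3 = 0"
    using D unfolding left_Dirac_zero_def by blast
  have n0: "norm (qim q) > 0" using q(2) by simp
  have "(-2 * (1 / norm (qim q))) *\<^sub>R \<beta> (q$1, norm (qim q)) = 0"
    unfolding s[symmetric] PF(1)[OF h(1)] PF(2)[OF qbasis_nth(5) h(2)] PF(2)[OF qbasis_nth(9) h(3)] PF(2)[OF qbasis_nth(13) h(4)] JF(3-5)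
    by (rule dirac_alg[symmetric]) (use JF cr in simp_all)
  then show ?thesis using n0 by simp
qed

lemma beta_zero_R:
  fixes \<alpha> \<beta> :: "real \<times> real \<Rightarrow> quat"
  assumes \<Omega>o: "open \<Omega>"
    and rep: "\<forall>J\<in>qsphere. \<forall>u v. slice_pt u v J \<in> \<Omega> \<longrightarrow> f (slice_pt u v J) = \<alpha> (u,v) + \<beta> (u,v) \<odot> J"
    and q: "q \<in> \<Omega>" "qim q \<noteq> 0"
    and hA: "(\<alpha> has_derivative A) (at (q$1, norm (qim q)))"
    and hB: "(\<beta> has_derivative B) (at (q$1, norm (qim q)))"
    and cr: "A (1,0) - B (0,1) = 0" "A (0,1) + B (1,0) = 0"
    and D: "right_Dirac_zero f q"
  shows "\<beta> (q$1, norm (qim q)) = 0"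
proof -
  have bm: "bounded_bilinear (\<lambda>a b. b \<odot> a)"
    using bounded_bilinear.flip[OF bilinear_qmult] .
  note PF = partial_formulas[OF bm \<Omega>o _ q hA hB]
  note JF = J_facts[OF q(2)]
  obtain d0 d1 d2 d3 where h: "has_partial f (qreal 1) q d0" "has_partial f qe1 q d1"
     "has_partial f qe2 q d2" "has_partial f qe3 q d3" and s: "d0 + d1 \<odot> qe1 + d2 \<odot> qe2 + d3 \<odot> qe3 = 0"
    using D unfolding right_Dirac_zero_def by blast
  have n0: "norm (qim q) > 0" using q(2) by simp
  have "(-2 * (1 / norm (qim q))) *\<^sub>R \<beta> (q$1, norm (qim q)) = 0"
    unfolding s[symmetric] PF(1)[OF rep h(1)] PF(2)[OF rep qbasis_nth(5) h(2)] PF(2)[OF rep qbasis_nth(9) h(3)] PF(2)[OF rep qbasis_nth(13) h(4)] JF(3-5)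
    by (rule dirac_alg_R[symmetric]) (use JF cr in simp_all)
  then show ?thesis using n0 by simp
qed

lemma open_slice_dom: "open \<Omega> \<Longrightarrow> open (slice_dom \<Omega>)"
proof -
  assume o: "open \<Omega>"
  have "slice_dom \<Omega> = (\<Union>J\<in>qsphere. (\<lambda>p. slice_pt (fst p) (snd p) J) -` \<Omega>)"
    by (auto simp: slice_dom_def)
  moreover have "open ((\<lambda>p. slice_pt (fst p) (snd p) J) -` \<Omega>)" for J
  proof -
    have e: "(\<lambda>p. slice_pt (fst p) (snd p) J) = (\<lambda>p. fst p *\<^sub>R qreal 1 + snd p *\<^sub>R J)"
      by (rule ext) (simp add: slice_pt_def quat_eq_iff)
    show ?thesis unfolding e by (rule open_vimage[OF o]) (auto intro!: continuous_intros)
  qed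
  ultimately show ?thesis by auto
qed

lemma qmult_zero [simp]: "a \<odot> 0 = 0" "0 \<odot> a = 0"
  by (simp_all add: quat_eq_iff)

lemma const_from_beta:
  fixes m :: "quat \<Rightarrow> quat \<Rightarrow> quat" and \<alpha> \<beta> :: "real \<times> real \<Rightarrow> quat"
  assumes bm: "bounded_bilinear m" and \<Omega>o: "open \<Omega>" and \<Omega>c: "connected \<Omega>"
    and sp: "stem_pair \<Omega> \<alpha> \<beta>"
    and rep: "\<forall>J\<in>qsphere. \<forall>u v. slice_pt u v J \<in> \<Omega> \<longrightarrow> f (slice_pt u v J) = \<alpha> (u,v) + m J (\<beta> (u,v))"
    and bz: "\<forall>q\<in>\<Omega>. qim q \<noteq> 0 \<longrightarrow> \<beta> (q$1, norm (qim q)) = 0"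
  shows "\<exists>a. \<forall>q\<in>\<Omega>. f q = a"
proof -
  obtain A B where AB: "\<And>p. p \<in> slice_dom \<Omega> \<Longrightarrow>
        (\<alpha> has_derivative A p) (at p) \<and> (\<beta> has_derivative B p) (at p) \<and>
        \<alpha> (fst p, - snd p) = \<alpha> p \<and> \<beta> (fst p, - snd p) = - \<beta> p \<and>
        A p (1, 0) - B p (0, 1) = 0 \<and> A p (0, 1) + B p (1, 0) = 0"
    using sp unfolding stem_pair_def by blast
  have oD: "open (slice_dom \<Omega>)" using open_slice_dom[OF \<Omega>o] .
  have \<beta>0: "\<beta> p = 0" if p: "p \<in> slice_dom \<Omega>" for p
  proof -
    obtain u v where uv: "p = (u,v)" by force
    obtain J where J: "J \<in> qsphere" "slice_pt u v J \<in> \<Omega>" using p uv by (auto simp: slice_dom_def)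
    have odd: "\<beta> (u, -v) = - \<beta> (u,v)" using AB[OF p] uv by simp
    have J1: "J$1 = 0" "norm J = 1" using J(1) by (auto simp: qsphere_def)
    have qi: "qim (slice_pt u v J) = v *\<^sub>R J" using J1 by (simp add: slice_pt_def quat_eq_iff)
    have q1: "slice_pt u v J $ 1 = u" using J1 by (simp add: slice_pt_def)
    consider "v = 0" | "v > 0" | "v < 0" by linarith
    then show ?thesis
    proof cases
      case 1
      then have "\<beta> (u,0) = - \<beta> (u,0)" using odd by simp
      then have "(2::real) *\<^sub>R \<beta> (u,0) = 0"
        by (metis add.right_inverse scaleR_2)
      then show ?thesis using 1 uv by simp
    next
      case 2
      have ne: "qim (slice_pt u v J) \<noteq> 0" using 2 J1 qi by auto
      have "\<beta> ((slice_pt u v J)$1, norm (qim (slice_pt u v J))) = 0" using bz J(2) ne by blast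
      then have "\<beta> (u, norm (qim (slice_pt u v J))) = 0" using q1 by simp
      then show ?thesis using 2 qi J1 uv by simp
    next
      case 3
      have ne: "qim (slice_pt u v J) \<noteq> 0" using 3 J1 qi by auto
      have "\<beta> ((slice_pt u v J)$1, norm (qim (slice_pt u v J))) = 0" using bz J(2) ne by blast
      then have "\<beta> (u, norm (qim (slice_pt u v J))) = 0" using q1 by simp
      then have "\<beta> (u, -v) = 0" using 3 qi J1 by simp
      then show ?thesis using odd uv by simp
    qed
  qed
  have A0: "A p = (\<lambda>h. 0)" if p: "p \<in> slice_dom \<Omega>" for p
  proof -
    have hB: "(\<beta> has_derivative B p) (at p)" using AB[OF p] by blast
    have "((\<lambda>_. 0) has_derivative B p) (at p)"
      by (rule has_derivative_transform_within_open[OF hB oD p]) (simp add: \<beta>0)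
    then have B0: "B p = (\<lambda>h. 0)" using has_derivative_unique has_derivative_const by blast
    have lA: "linear (A p)" using AB[OF p] has_derivative_linear by blast
    have a10: "A p (1,0) = 0" "A p (0,1) = 0" using AB[OF p] B0 by auto
    show ?thesis
    proof
      fix h :: "real \<times> real"
      have "A p h = A p (fst h *\<^sub>R (1,0) + snd h *\<^sub>R (0,1))" by simp
      also have "\<dots> = fst h *\<^sub>R A p (1,0) + snd h *\<^sub>R A p (0,1)"
        by (simp only: linear_add[OF lA] linear_cmul[OF lA])
      finally have "A p h = fst h *\<^sub>R A p (1,0) + snd h *\<^sub>R A p (0,1)" .
      then show "A p h = 0" using a10 by simp
    qed
  qed
  have loc: "\<exists>e>0. ball p e \<subseteq> slice_dom \<Omega> \<and> (\<forall>y\<in>ball p e. \<alpha> y = \<alpha> p)" if p: "p \<in> slice_dom \<Omega>" for p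
  proof -
    obtain e where e: "e > 0" "ball p e \<subseteq> slice_dom \<Omega>" using oD p openE by blast
    have "\<exists>c. \<forall>y\<in>ball p e. \<alpha> y = c"
    proof (rule has_derivative_zero_constant[OF convex_ball])
      fix y assume "y \<in> ball p e"
      then have y: "y \<in> slice_dom \<Omega>" using e by blast
      then have "(\<alpha> has_derivative A y) (at y)" using AB by blast
      then show "(\<alpha> has_derivative (\<lambda>h. 0)) (at y within ball p e)"
        using A0[OF y] by (simp add: has_derivative_at_withinI)
    qed
    then show ?thesis using e by (metis centre_in_ball)
  qed
  define \<phi> where "\<phi> q = (q$1, norm (qim q))" for q
  have \<phi>dom: "\<phi> q \<in> slice_dom \<Omega>" and f\<phi>: "f q = \<alpha> (\<phi> q)" if q: "q \<in> \<Omega>" for q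
  proof -
    have "\<exists>J\<in>qsphere. slice_pt (q$1) (norm (qim q)) J = q"
    proof (cases "qim q = 0")
      case True
      have "qe1 \<in> qsphere" by (simp add: qsphere_def norm_quat)
      moreover have "slice_pt (q$1) (norm (qim q)) qe1 = q"
        using True by (simp add: slice_pt_def quat_eq_iff)
      ultimately show ?thesis by blast
    next
      case False then show ?thesis using slice_decomp by blast
    qed
    then obtain J where J: "J \<in> qsphere" "slice_pt (q$1) (norm (qim q)) J = q" by blast
    show d: "\<phi> q \<in> slice_dom \<Omega>" unfolding slice_dom_def \<phi>_def using J q by force
    have "f q = \<alpha> (\<phi> q) + m J (\<beta> (\<phi> q))" using rep J q by (metis \<phi>_def)
    then show "f q = \<alpha> (\<phi> q)" using \<beta>0[OF d] bounded_bilinear.zero_right[OF bm] by simp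
  qed
  have c\<phi>: "continuous_on UNIV \<phi>"
    unfolding \<phi>_def by (auto intro!: continuous_intros cont_qim)
  have ev: "\<forall>q\<in>\<Omega>. eventually (\<lambda>q'. f q = f q') (at q within \<Omega>)"
  proof
    fix q assume q: "q \<in> \<Omega>"
    obtain e where e: "e > 0" "\<forall>y\<in>ball (\<phi> q) e. \<alpha> y = \<alpha> (\<phi> q)" using loc[OF \<phi>dom[OF q]] by blast
    let ?U = "\<phi> -` ball (\<phi> q) e"
    have "open ?U" by (rule open_vimage[OF open_ball c\<phi>])
    moreover have "q \<in> ?U" using e(1) by simp
    moreover have "\<forall>x\<in>?U. x \<noteq> q \<longrightarrow> x \<in> \<Omega> \<longrightarrow> f q = f x"
    proof (intro ballI impI)
      fix x assume x: "x \<in> ?U" "x \<in> \<Omega>"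
      have "\<alpha> (\<phi> x) = \<alpha> (\<phi> q)" using e(2) x(1) by blast
      then show "f q = f x" using f\<phi>[OF x(2)] f\<phi>[OF q] by simp
    qed
    ultimately show "eventually (\<lambda>q'. f q = f q') (at q within \<Omega>)"
      unfolding eventually_at_topological by blast
  qed
  show ?thesis
  proof (cases "\<Omega> = {}")
    case True then show ?thesis by blast
  next
    case False
    then obtain q0 where q0: "q0 \<in> \<Omega>" by blast
    have "\<forall>q\<in>\<Omega>. f q = f q0"
      using connected_local_const[OF \<Omega>c _ q0 ev] by metis
    then show ?thesis by blast
  qed
qed

lemma const_partial:
  assumes "open \<Omega>" "q \<in> \<Omega>" "\<forall>p\<in>\<Omega>. f p = a"
  shows "has_partial f e q 0"
  unfolding has_partial_def
proof (rule has_vector_derivative_transform_within_open[of "\<lambda>t. a"])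
  show "((\<lambda>t. a) has_vector_derivative 0) (at 0)" by (rule has_vector_derivative_const)
  show "open ((\<lambda>t. q + t *\<^sub>R e) -` \<Omega>)"
    by (rule open_vimage[OF assms(1)]) (auto intro!: continuous_intros)
  show "0 \<in> (\<lambda>t. q + t *\<^sub>R e) -` \<Omega>" using assms(2) by simp
  show "\<And>y. y \<in> (\<lambda>t. q + t *\<^sub>R e) -` \<Omega> \<Longrightarrow> a = f (q + y *\<^sub>R e)" using assms(3) by simp
qed

lemma const_stem: "stem_pair \<Omega> (\<lambda>_. a) (\<lambda>_. 0)"
  unfolding stem_pair_def
  by (rule exI[of _ "\<lambda>p h. 0"], rule exI[of _ "\<lambda>p h. 0"]) (simp add: has_derivative_const)

lemma const_SH:
  assumes "\<forall>q\<in>\<Omega>. f q = a"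
  shows "f \<in> SH_L \<Omega>" "f \<in> SH_R \<Omega>"
  unfolding SH_L_def SH_R_def mem_Collect_eq
  by (rule exI[of _ "\<lambda>_. a"], rule exI[of _ "\<lambda>_. 0"], use assms const_stem[of \<Omega> a] in simp)+

lemma in_dom:
  assumes "q \<in> \<Omega>" "qim q \<noteq> 0"
  shows "(q$1, norm (qim q)) \<in> slice_dom \<Omega>"
  unfolding slice_dom_def using slice_decomp[OF assms(2)] assms(1) by force

theorem theorem5p10:
  fixes \<Omega> :: "quat set"
  assumes "slice_cauchy_domain \<Omega>" and "connected \<Omega>"
  shows "{f \<in> SH_L \<Omega>. \<forall>q\<in>\<Omega>. left_Dirac_zero f q}
           = {f \<in> SH_L \<Omega>. \<exists>a::quat. \<forall>q\<in>\<Omega>. f q = a}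
       \<and> {f \<in> SH_L \<Omega>. \<exists>a::quat. \<forall>q\<in>\<Omega>. f q = a}
           = {f \<in> SH_R \<Omega>. \<exists>a::quat. \<forall>q\<in>\<Omega>. f q = a}
       \<and> {f \<in> SH_R \<Omega>. \<exists>a::quat. \<forall>q\<in>\<Omega>. f q = a}
           = {f \<in> SH_R \<Omega>. \<forall>q\<in>\<Omega>. right_Dirac_zero f q}"
proof -
  have \<Omega>o: "open \<Omega>" using assms(1) by (simp add: slice_cauchy_domain_def)
  have L1: "\<exists>a. \<forall>q\<in>\<Omega>. f q = a" if f: "f \<in> SH_L \<Omega>" and D: "\<forall>q\<in>\<Omega>. left_Dirac_zero f q" for f
  proof -
    obtain \<alpha> \<beta> where sp: "stem_pair \<Omega> \<alpha> \<beta>" and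
      rep: "\<forall>J\<in>qsphere. \<forall>u v. slice_pt u v J \<in> \<Omega> \<longrightarrow> f (slice_pt u v J) = \<alpha> (u, v) + J \<odot> \<beta> (u, v)"
      using f unfolding SH_L_def by blast
    obtain A B where AB: "\<forall>p\<in>slice_dom \<Omega>.
        (\<alpha> has_derivative A p) (at p) \<and> (\<beta> has_derivative B p) (at p) \<and>
        \<alpha> (fst p, - snd p) = \<alpha> p \<and> \<beta> (fst p, - snd p) = - \<beta> p \<and>
        A p (1, 0) - B p (0, 1) = 0 \<and> A p (0, 1) + B p (1, 0) = 0"
      using sp unfolding stem_pair_def by blast
    have bz: "\<forall>q\<in>\<Omega>. qim q \<noteq> 0 \<longrightarrow> \<beta> (q$1, norm (qim q)) = 0"
    proof (intro ballI impI)
      fix q assume q: "q \<in> \<Omega>" "qim q \<noteq> 0"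
      note P = AB[rule_format, OF in_dom[OF q]]
      show "\<beta> (q$1, norm (qim q)) = 0"
        by (rule beta_zero_L[OF \<Omega>o rep q, where A = "A (q$1, norm (qim q))" and B = "B (q$1, norm (qim q))"]) (use P D q in auto)
    qed
    show ?thesis by (rule const_from_beta[OF bilinear_qmult \<Omega>o assms(2) sp rep bz])
  qed
  have R1: "\<exists>a. \<forall>q\<in>\<Omega>. f q = a" if f: "f \<in> SH_R \<Omega>" and D: "\<forall>q\<in>\<Omega>. right_Dirac_zero f q" for f
  proof -
    obtain \<alpha> \<beta> where sp: "stem_pair \<Omega> \<alpha> \<beta>" and
      rep: "\<forall>J\<in>qsphere. \<forall>u v. slice_pt u v J \<in> \<Omega> \<longrightarrow> f (slice_pt u v J) = \<alpha> (u, v) + \<beta> (u, v) \<odot> J"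
      using f unfolding SH_R_def by blast
    obtain A B where AB: "\<forall>p\<in>slice_dom \<Omega>.
        (\<alpha> has_derivative A p) (at p) \<and> (\<beta> has_derivative B p) (at p) \<and>
        \<alpha> (fst p, - snd p) = \<alpha> p \<and> \<beta> (fst p, - snd p) = - \<beta> p \<and>
        A p (1, 0) - B p (0, 1) = 0 \<and> A p (0, 1) + B p (1, 0) = 0"
      using sp unfolding stem_pair_def by blast
    have bz: "\<forall>q\<in>\<Omega>. qim q \<noteq> 0 \<longrightarrow> \<beta> (q$1, norm (qim q)) = 0"
    proof (intro ballI impI)
      fix q assume q: "q \<in> \<Omega>" "qim q \<noteq> 0"
      note P = AB[rule_format, OF in_dom[OF q]]
      show "\<beta> (q$1, norm (qim q)) = 0"
        by (rule beta_zero_R[OF \<Omega>o rep q, where A = "A (q$1, norm (qim q))" and B = "B (q$1, norm (qim q))"]) (use P D q in auto)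
    qed
    have bm: "bounded_bilinear (\<lambda>a b. b \<odot> a)"
      using bounded_bilinear.flip[OF bilinear_qmult] .
    show ?thesis
      by (rule const_from_beta[where m = "\<lambda>a b. b \<odot> a", OF bm \<Omega>o assms(2) sp]) (use rep bz in auto)
  qed
  have LC: "left_Dirac_zero f q" if "q \<in> \<Omega>" "\<forall>p\<in>\<Omega>. f p = a" for f q a
    unfolding left_Dirac_zero_def using const_partial[OF \<Omega>o that] by fastforce
  have RC: "right_Dirac_zero f q" if "q \<in> \<Omega>" "\<forall>p\<in>\<Omega>. f p = a" for f q a
    unfolding right_Dirac_zero_def using const_partial[OF \<Omega>o that] by fastforce
  show ?thesis
    using L1 R1 LC RC const_SH by blast
qed

end
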